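(* Let $q$ be a prime power and let $\ell_1,\ell_2,\ell_3,\ell_4$ be lines in $\mathrm{PG}(4,q)$ such that (L1) any three of them span $\mathrm{PG}(4,q)$, and (L2) any two of them are skew. Then at most one of the four lines can be obtained by (exact) $(3,1)$-repair from the remaining three lines; here a line $\ell$ is obtained by $(3,1)$-repair from lines $a,b,c$ if there are points $P_a\in a$, $P_b\in b$, $P_c\in c$ with $\ell\subseteq\langle P_a,P_b,P_c\rangle$. *)

theory Defs
  imports "HOL-Analysis.Analysis"
begin

text \<open>PG(4,q) is modelled by the vector space 'a^5 over a finite field 'a (|'a| = q,
  a prime power).  Projective subspaces of projective dimension k are the
  linear subspaces of vector dimension k+1.\<close>

definition pg_point :: "('a::field ^ 5) set \<Rightarrow> bool" where
  "pg_point P \<longleftrightarrow> vec.subspace P \<and> vec.dim P = 1"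

definition pg_line :: "('a::field ^ 5) set \<Rightarrow> bool" where
  "pg_line L \<longleftrightarrow> vec.subspace L \<and> vec.dim L = 2"

definition skew :: "('a::field ^ 5) set \<Rightarrow> ('a ^ 5) set \<Rightarrow> bool" where
  "skew A B \<longleftrightarrow> A \<inter> B = {0}"

definition spans_all3 :: "('a::field ^ 5) set \<Rightarrow> ('a ^ 5) set \<Rightarrow> ('a ^ 5) set \<Rightarrow> bool" where
  "spans_all3 A B C \<longleftrightarrow> vec.span (A \<union> B \<union> C) = UNIV"

definition repair31 ::
  "('a::field ^ 5) set \<Rightarrow> ('a ^ 5) set \<Rightarrow> ('a ^ 5) set \<Rightarrow> ('a ^ 5) set \<Rightarrow> bool" where
  "repair31 L a b c \<longleftrightarrow>
     (\<exists>Pa Pb Pc. pg_point Pa \<and> pg_point Pb \<and> pg_point Pc \<and>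
        Pa \<subseteq> a \<and> Pb \<subseteq> b \<and> Pc \<subseteq> c \<and> L \<subseteq> vec.span (Pa \<union> Pb \<union> Pc))"

definition repairable_from_rest :: "(nat \<Rightarrow> ('a::field ^ 5) set) \<Rightarrow> nat \<Rightarrow> bool" where
  "repairable_from_rest l i \<longleftrightarrow>
     (\<exists>a b c. {a, b, c} = {0..<4} - {i} \<and> a \<noteq> b \<and> a \<noteq> c \<and> b \<noteq> c \<and>
        repair31 (l i) (l a) (l b) (l c))"

end

theory Submission imports Defs begin

lemma dim_un:
  fixes S T :: "('a::field ^ 'n) set"
  assumes "vec.subspace S" "vec.subspace T"
  shows "vec.dim (vec.span (S \<union> T)) + vec.dim (S \<inter> T) = vec.dim S + vec.dim T"
proof -
  have "vec.span (S \<union> T) = {x + y |x y. x \<in> S \<and> y \<in> T}"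
  proof -
    have "vec.span S = S" "vec.span T = T" using assms by simp_all
    then show ?thesis using vec.span_Un[of S T] by (simp only:)
  qed
  then show ?thesis using vec.dim_sums_Int[OF assms] by simp
qed

lemma dim_zero: "vec.dim ({0} :: ('a::field ^ 'n) set) = 0"
  using vec.dim_insert[of "0::'a^'n" "{}"] by (simp add: vec.span_zero)

lemma dim_un_le:
  fixes S T :: "('a::field ^ 'n) set"
  assumes "vec.subspace S" "vec.subspace T"
  shows "vec.dim (vec.span (S \<union> T)) \<le> vec.dim S + vec.dim T"
  using dim_un[OF assms] by linarith

lemma span_un_span:
  fixes S T :: "('a::field ^ 'n) set"
  shows "vec.span (vec.span S \<union> T) = vec.span (S \<union> T)"
proof
  show "vec.span (vec.span S \<union> T) \<subseteq> vec.span (S \<union> T)"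
  proof (rule vec.span_minimal)
    have "vec.span S \<subseteq> vec.span (S \<union> T)" by (rule vec.span_mono) blast
    moreover have "T \<subseteq> vec.span (S \<union> T)" using vec.span_superset[of "S \<union> T"] by blast
    ultimately show "vec.span S \<union> T \<subseteq> vec.span (S \<union> T)" by blast
  qed simp
  show "vec.span (S \<union> T) \<subseteq> vec.span (vec.span S \<union> T)"
    using vec.span_superset[of S] by (intro vec.span_mono) blast
qed

lemma dim3_le:
  fixes A B C :: "('a::field ^ 'n) set"
  assumes "vec.subspace A" "vec.subspace B" "vec.subspace C"
  shows "vec.dim (vec.span (A \<union> B \<union> C)) \<le> vec.dim A + vec.dim B + vec.dim C"
proof -
  have "vec.dim (vec.span (vec.span (A \<union> B) \<union> C)) \<le> vec.dim (vec.span (A \<union> B)) + vec.dim C"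
    by (rule dim_un_le) (auto simp: assms)
  moreover have "vec.dim (vec.span (A \<union> B)) \<le> vec.dim A + vec.dim B"
    by (rule dim_un_le) (auto simp: assms)
  ultimately show ?thesis by (simp add: span_un_span)
qed

lemma inter_dim1:
  fixes L H :: "('a::field ^ 5) set"
  assumes "pg_line L" "vec.subspace H" "vec.dim H = 4" "vec.span (L \<union> H) = UNIV"
  shows "vec.dim (L \<inter> H) = 1"
proof -
  have "vec.dim (vec.span (L \<union> H)) = 5" using assms(4) vec_dim_card[where 'a='a and 'n=5] by simp
  then show ?thesis using dim_un[of L H] assms unfolding pg_line_def by simp
qed

lemma point_eq:
  fixes P L H :: "('a::field ^ 5) set"
  assumes "pg_point P" "pg_line L" "vec.subspace H" "vec.dim H = 4" "vec.span (L \<union> H) = UNIV"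
    "P \<subseteq> L" "P \<subseteq> H"
  shows "P = L \<inter> H"
proof (rule vec.subspace_dim_equal)
  show "vec.subspace P" using assms(1) pg_point_def by auto
  show "vec.subspace (L \<inter> H)" using assms(2,3) pg_line_def vec.subspace_inter by blast
  show "P \<subseteq> L \<inter> H" using assms by auto
  show "vec.dim (L \<inter> H) \<le> vec.dim P" using inter_dim1[OF assms(2-5)] assms(1) unfolding pg_point_def by simp
qed

lemma key:
  fixes A B C D Pb Pc Pd Qa Qc Qd :: "('a::field ^ 5) set"
  assumes lines: "pg_line A" "pg_line B" "pg_line C" "pg_line D"
    and sk: "skew A B"
    and sp: "spans_all3 A B C" "spans_all3 A B D"
    and pts: "pg_point Pb" "pg_point Pc" "pg_point Pd" "pg_point Qa" "pg_point Qc" "pg_point Qd"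
    and inc: "Pb \<subseteq> B" "Pc \<subseteq> C" "Pd \<subseteq> D" "Qa \<subseteq> A" "Qc \<subseteq> C" "Qd \<subseteq> D"
    and rA: "A \<subseteq> vec.span (Pb \<union> Pc \<union> Pd)"
    and rB: "B \<subseteq> vec.span (Qa \<union> Qc \<union> Qd)"
  shows False
proof -
  have subA: "vec.subspace A" and subB: "vec.subspace B" and dA: "vec.dim A = 2" and dB: "vec.dim B = 2"
    using lines pg_line_def by auto
  have sub: "vec.subspace Pb" "vec.subspace Pc" "vec.subspace Pd" "vec.subspace Qa" "vec.subspace Qc" "vec.subspace Qd"
    and d1: "vec.dim Pb = 1" "vec.dim Pc = 1" "vec.dim Pd = 1" "vec.dim Qa = 1" "vec.dim Qc = 1" "vec.dim Qd = 1"
    using pts pg_point_def by auto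
  define H where "H = vec.span (A \<union> B)"
  have subH: "vec.subspace H" unfolding H_def by simp
  have dH: "vec.dim H = 4"
    using dim_un[OF subA subB] sk dA dB dim_zero unfolding skew_def H_def by simp
  define S0 where "S0 = vec.span (Pb \<union> Pc \<union> Pd)"
  define S1 where "S1 = vec.span (Qa \<union> Qc \<union> Qd)"
  have dS0: "vec.dim S0 \<le> 3" unfolding S0_def using dim3_le[of Pb Pc Pd] sub d1 by simp
  have dS1: "vec.dim S1 \<le> 3" unfolding S1_def using dim3_le[of Qa Qc Qd] sub d1 by simp
  have dAPb: "vec.dim (vec.span (A \<union> Pb)) = 3"
  proof -
    have "A \<inter> Pb \<subseteq> {0}" using sk inc(1) unfolding skew_def by blast
    moreover have "0 \<in> A \<inter> Pb" using sub(1) subA vec.subspace_0 by blast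
    ultimately have "A \<inter> Pb = {0}" by blast
    then show ?thesis using dim_un[OF subA sub(1)] dA d1 dim_zero by simp
  qed
  have "vec.span (A \<union> Pb) = vec.span S0"
  proof (rule vec.dim_eq_span)
    show "A \<union> Pb \<subseteq> S0" unfolding S0_def
      using rA vec.span_superset[of "Pb \<union> Pc \<union> Pd"] by auto
    show "vec.dim S0 \<le> vec.dim (A \<union> Pb)" using dS0 dAPb by simp
  qed
  moreover have "vec.span S0 = S0" unfolding S0_def by (rule vec.span_span)
  ultimately have "S0 = vec.span (A \<union> Pb)" by simp
  also have "\<dots> \<subseteq> H" unfolding H_def using inc(1) by (intro vec.span_mono) blast
  finally have S0H: "S0 \<subseteq> H" .
  have dBQa: "vec.dim (vec.span (B \<union> Qa)) = 3"
  proof -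
    have "B \<inter> Qa \<subseteq> {0}" using sk inc(4) unfolding skew_def by blast
    moreover have "0 \<in> B \<inter> Qa" using sub(4) subB vec.subspace_0 by blast
    ultimately have "B \<inter> Qa = {0}" by blast
    then show ?thesis using dim_un[OF subB sub(4)] dB d1 dim_zero by simp
  qed
  have "vec.span (B \<union> Qa) = vec.span S1"
  proof (rule vec.dim_eq_span)
    show "B \<union> Qa \<subseteq> S1" unfolding S1_def
      using rB vec.span_superset[of "Qa \<union> Qc \<union> Qd"] by auto
    show "vec.dim S1 \<le> vec.dim (B \<union> Qa)" using dS1 dBQa by simp
  qed
  moreover have "vec.span S1 = S1" unfolding S1_def by (rule vec.span_span)
  ultimately have "S1 = vec.span (B \<union> Qa)" by simp
  also have "\<dots> \<subseteq> H" unfolding H_def using inc(4) by (intro vec.span_mono) blast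
  finally have S1H: "S1 \<subseteq> H" .
  have spC: "vec.span (C \<union> H) = UNIV"
  proof -
    have "A \<union> B \<union> C \<subseteq> vec.span (C \<union> H)"
      using vec.span_superset[of "A \<union> B"] vec.span_superset[of "C \<union> H"] unfolding H_def by blast
    then have "vec.span (A \<union> B \<union> C) \<subseteq> vec.span (C \<union> H)" by (intro vec.span_minimal) auto
    then show ?thesis using sp(1) unfolding spans_all3_def by auto
  qed
  have spD: "vec.span (D \<union> H) = UNIV"
  proof -
    have "A \<union> B \<union> D \<subseteq> vec.span (D \<union> H)"
      using vec.span_superset[of "A \<union> B"] vec.span_superset[of "D \<union> H"] unfolding H_def by blast
    then have "vec.span (A \<union> B \<union> D) \<subseteq> vec.span (D \<union> H)" by (intro vec.span_minimal) auto
    then show ?thesis using sp(2) unfolding spans_all3_def by auto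
  qed
  have PcH: "Pc \<subseteq> H" using S0H vec.span_superset[of "Pb \<union> Pc \<union> Pd"] unfolding S0_def by blast
  have PdH: "Pd \<subseteq> H" using S0H vec.span_superset[of "Pb \<union> Pc \<union> Pd"] unfolding S0_def by blast
  have QcH: "Qc \<subseteq> H" using S1H vec.span_superset[of "Qa \<union> Qc \<union> Qd"] unfolding S1_def by blast
  have QdH: "Qd \<subseteq> H" using S1H vec.span_superset[of "Qa \<union> Qc \<union> Qd"] unfolding S1_def by blast
  have "Qc = Pc" using point_eq[OF pts(5) lines(3) subH dH spC inc(5) QcH]
      point_eq[OF pts(2) lines(3) subH dH spC inc(2) PcH] by simp
  moreover have "Qd = Pd" using point_eq[OF pts(6) lines(4) subH dH spD inc(6) QdH]
      point_eq[OF pts(3) lines(4) subH dH spD inc(3) PdH] by simp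
  moreover have "Qa \<subseteq> S0" using inc(4) rA unfolding S0_def by blast
  ultimately have "Qa \<union> Qc \<union> Qd \<subseteq> S0" unfolding S0_def
    using vec.span_superset[of "Pb \<union> Pc \<union> Pd"] by auto
  then have S10: "S1 \<subseteq> S0" unfolding S1_def by (intro vec.span_minimal) (auto simp: S0_def)
  have "A \<union> B \<subseteq> S0" using rA rB S10 unfolding S0_def S1_def by auto
  then have "H \<subseteq> S0" unfolding H_def by (intro vec.span_minimal) (auto simp: S0_def)
  then have "vec.dim H \<le> vec.dim S0" by (rule vec.dim_subset)
  then show False using dH dS0 by simp
qed


lemma rep_swap12:
  assumes "repair31 L a b c" shows "repair31 L b a c"
proof -
  obtain Pa Pb Pc where h: "pg_point Pa" "pg_point Pb" "pg_point Pc"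
     "Pa \<subseteq> a" "Pb \<subseteq> b" "Pc \<subseteq> c" "L \<subseteq> vec.span (Pa \<union> Pb \<union> Pc)"
    using assms unfolding repair31_def by blast
  have e: "Pa \<union> Pb \<union> Pc = Pb \<union> Pa \<union> Pc" by blast
  show ?thesis unfolding repair31_def
    by (rule exI[of _ Pb], rule exI[of _ Pa], rule exI[of _ Pc]) (use h e in simp)
qed

lemma rep_swap23:
  assumes "repair31 L a b c" shows "repair31 L a c b"
proof -
  obtain Pa Pb Pc where h: "pg_point Pa" "pg_point Pb" "pg_point Pc"
     "Pa \<subseteq> a" "Pb \<subseteq> b" "Pc \<subseteq> c" "L \<subseteq> vec.span (Pa \<union> Pb \<union> Pc)"
    using assms unfolding repair31_def by blast
  have e: "Pa \<union> Pb \<union> Pc = Pa \<union> Pc \<union> Pb" by blast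
  show ?thesis unfolding repair31_def
    by (rule exI[of _ Pa], rule exI[of _ Pc], rule exI[of _ Pb]) (use h e in simp)
qed

lemma others:
  fixes i j :: nat
  assumes "i < 4" "j < 4" "i \<noteq> j"
  shows "\<exists>k m. k < 4 \<and> m < 4 \<and> k \<noteq> m \<and> k \<noteq> i \<and> k \<noteq> j \<and> m \<noteq> i \<and> m \<noteq> j"
proof -
  have sub: "{i, j} \<subseteq> {0..<4}" using assms by simp
  have c2: "card {i, j} = 2" using assms(3) by simp
  have "card ({0..<4} - {i, j}) = card {0..<(4::nat)} - card {i, j}"
    by (rule card_Diff_subset) (use sub in auto)
  then have "card ({0..<4} - {i, j}) = 2" using c2 by simp
  then obtain k m where "{0..<4} - {i, j} = {k, m}" "k \<noteq> m" by (auto simp: card_2_iff)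
  then show ?thesis by (intro exI[of _ k] exI[of _ m]) (metis Diff_iff atLeastLessThan_iff insertCI)
qed
lemma pigeon:
  fixes i j k m x :: nat
  assumes "i < 4" "j < 4" "k < 4" "m < 4" "k \<noteq> m" "k \<noteq> i" "k \<noteq> j" "m \<noteq> i" "m \<noteq> j" "i \<noteq> j" "x < 4" "x \<noteq> i"
  shows "x = j \<or> x = k \<or> x = m"
proof -
  have s: "{i, j, k, m} \<subseteq> {0..<4}" using assms by simp
  have c: "card {i, j, k, m} = card {0..<(4::nat)}" using assms(5-10) by simp
  have "{i, j, k, m} = {0..<4}" by (rule card_subset_eq[OF _ s c]) simp
  then have "x \<in> {i, j, k, m}" using assms(11) by simp
  then show ?thesis using assms(12) by simp
qed
lemma perm:
  fixes a b c j k m :: nat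
  assumes "{a, b, c} = {j, k, m}" "a \<noteq> b" "a \<noteq> c" "b \<noteq> c"
  shows "(a,b,c) \<in> {(j,k,m),(j,m,k),(k,j,m),(k,m,j),(m,j,k),(m,k,j)}"
proof -
  have "a \<in> {j,k,m}" "b \<in> {j,k,m}" "c \<in> {j,k,m}" "j \<in> {a,b,c}" "k \<in> {a,b,c}" "m \<in> {a,b,c}"
    using assms(1) by blast+
  then show ?thesis using assms(2-4) by auto
qed

lemma rep_any:
  assumes "repairable_from_rest l i" "{j, k, m} = {0..<4} - {i}" "j \<noteq> k" "j \<noteq> m" "k \<noteq> m"
  shows "repair31 (l i) (l j) (l k) (l m)"
proof -
  obtain a b c where abc: "{a, b, c} = {0..<4} - {i}" "a \<noteq> b" "a \<noteq> c" "b \<noteq> c"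
    and r: "repair31 (l i) (l a) (l b) (l c)"
    using assms(1) unfolding repairable_from_rest_def by blast
  have eq: "{a, b, c} = {j, k, m}" using abc(1) assms(2) by simp
  have "(a,b,c) \<in> {(j,k,m),(j,m,k),(k,j,m),(k,m,j),(m,j,k),(m,k,j)}"
    using perm[OF eq abc(2-4)] .
  then have "(a=j \<and> b=k \<and> c=m) \<or> (a=j \<and> b=m \<and> c=k) \<or> (a=k \<and> b=j \<and> c=m) \<or>
      (a=k \<and> b=m \<and> c=j) \<or> (a=m \<and> b=j \<and> c=k) \<or> (a=m \<and> b=k \<and> c=j)" by simp
  then show ?thesis
  proof (elim disjE conjE)
    assume "a=j" "b=k" "c=m" then show ?thesis using r by simp
  next
    assume "a=j" "b=m" "c=k" then show ?thesis using rep_swap23[OF r] by simp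
  next
    assume "a=k" "b=j" "c=m" then show ?thesis using rep_swap12[OF r] by simp
  next
    assume "a=k" "b=m" "c=j" then show ?thesis using rep_swap12[OF rep_swap23[OF r]] by simp
  next
    assume "a=m" "b=j" "c=k" then show ?thesis using rep_swap23[OF rep_swap12[OF r]] by simp
  next
    assume "a=m" "b=k" "c=j" then show ?thesis using rep_swap23[OF rep_swap12[OF rep_swap23[OF r]]] by simp
  qed
qed

lemma fill:
  fixes i j k m :: nat
  assumes "i < 4" "j < 4" "k < 4" "m < 4" "k \<noteq> m" "k \<noteq> i" "k \<noteq> j" "m \<noteq> i" "m \<noteq> j" "i \<noteq> j"
  shows "{j, k, m} = {0..<4} - {i}"
proof
  show "{j, k, m} \<subseteq> {0..<4} - {i}" using assms by auto
  show "{0..<4} - {i} \<subseteq> {j, k, m}"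
  proof
    fix x assume "x \<in> {0..<4} - {i}"
    then have "x < 4" "x \<noteq> i" by auto
    then have "x = j \<or> x = k \<or> x = m" using pigeon assms by blast
    then show "x \<in> {j, k, m}" by auto
  qed
qed

theorem mainTheorem5:
  fixes l :: "nat \<Rightarrow> ('a::{field,finite} ^ 5) set"
  assumes lines: "\<And>i. i < 4 \<Longrightarrow> pg_line (l i)"
    and L1: "\<And>i j k. i < 4 \<Longrightarrow> j < 4 \<Longrightarrow> k < 4 \<Longrightarrow> i \<noteq> j \<Longrightarrow> i \<noteq> k \<Longrightarrow> j \<noteq> k \<Longrightarrow>
               spans_all3 (l i) (l j) (l k)"
    and L2: "\<And>i j. i < 4 \<Longrightarrow> j < 4 \<Longrightarrow> i \<noteq> j \<Longrightarrow> skew (l i) (l j)"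
  shows "card {i. i < 4 \<and> repairable_from_rest l i} \<le> 1"
proof -
  have "i = j" if hi: "i < 4" "repairable_from_rest l i" and hj: "j < 4" "repairable_from_rest l j" for i j
  proof (rule ccontr)
    assume ne: "i \<noteq> j"
    obtain k m where km: "k < 4" "m < 4" "k \<noteq> m" "k \<noteq> i" "k \<noteq> j" "m \<noteq> i" "m \<noteq> j"
      using others[OF hi(1) hj(1) ne] by blast
    have ri: "repair31 (l i) (l j) (l k) (l m)"
      by (rule rep_any[OF hi(2) fill]) (use km hi hj ne in auto)
    have rj: "repair31 (l j) (l i) (l k) (l m)"
      by (rule rep_any[OF hj(2) fill]) (use km hi hj ne in auto)
    obtain Pb Pc Pd where P: "pg_point Pb" "pg_point Pc" "pg_point Pd"
      "Pb \<subseteq> l j" "Pc \<subseteq> l k" "Pd \<subseteq> l m" "l i \<subseteq> vec.span (Pb \<union> Pc \<union> Pd)"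
      using ri unfolding repair31_def by blast
    obtain Qa Qc Qd where Q: "pg_point Qa" "pg_point Qc" "pg_point Qd"
      "Qa \<subseteq> l i" "Qc \<subseteq> l k" "Qd \<subseteq> l m" "l j \<subseteq> vec.span (Qa \<union> Qc \<union> Qd)"
      using rj unfolding repair31_def by blast
    show False
      by (rule key[OF lines[OF hi(1)] lines[OF hj(1)] lines[OF km(1)] lines[OF km(2)]
            L2[OF hi(1) hj(1) ne] L1[OF hi(1) hj(1) km(1) ne km(4)[symmetric] km(5)[symmetric]]
            L1[OF hi(1) hj(1) km(2) ne km(6)[symmetric] km(7)[symmetric]]
            P(1-3) Q(1-3) P(4-6) Q(4-6) P(7) Q(7)])
  qed
  moreover have fin: "finite {i. i < 4 \<and> repairable_from_rest l i}" by simp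
  ultimately show ?thesis
    using card_le_Suc0_iff_eq[OF fin] by auto
qed

end
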